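(* Let $(x,y,z,v)(t)$ be a normal extremal ($M=1$) starting at the identity with $\varphi_4\neq0$, and suppose $\theta(t)$ is constant on a non-degenerate interval $J\subset\mathbb R$. Let $t_0$ be the point of $\overline J$ closest to $0$ and $y_0=y(t_0)$, $z_0=z(t_0)$, $v_0=v(t_0)$. Then for $t\in J$: $$x(t)\equiv-\frac{\varphi_3}{\varphi_4},\quad y(t)=y_0+\frac{2\varphi_4(t-t_0)}{2\varphi_2\varphi_4-\varphi_3^2},\quad z(t)=z_0+\frac{\varphi_3(t-t_0)}{\varphi_3^2-2\varphi_2\varphi_4},\quad v(t)=v_0+\frac{\varphi_3^2(t-t_0)}{6\varphi_4(2\varphi_2\varphi_4-\varphi_3^2)},$$ where $v_0$ is determined from $x_0=-\varphi_3/\varphi_4$, $y_0$, $z_0$ by $\varphi_1x_0+\varphi_2y_0+(2\varphi_3+\tfrac12\varphi_4x_0)z_0+3\varphi_4v_0=t_0$. In particular, if $\varphi_3=0$ then on $J$: $x\equiv0$, $y(t)=y_0+(t-t_0)/\varphi_2$, $z\equiv z_0$, $v\equiv v_0=(t_0-\varphi_2y_0)/(3\varphi_4)$.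
   Context: Let $\mathfrak g$ be the Engel algebra with basis $X,Y,Z,V$, $[X,Y]=Z$, $[X,Z]=V$, all other brackets of basis elements zero; $G$ the corresponding connected simply connected Lie group, with coordinates of the first kind $(x,y,z,v)$ (identity $=0$). Let $F$ be an arbitrary norm on $\mathbb R^2$, $U=\{u:F(u)\le1\}$, $(u_1,u_2)\leftrightarrow u_1X(e)+u_2Y(e)$. The control system is $\dot x=u_1,\ \dot y=u_2,\ \dot z=\tfrac12(xu_2-yu_1),\ \dot v=-\tfrac12(z+\tfrac16xy)u_1+\tfrac1{12}x^2u_2$, measurable $u(t)\in U$, $x(0)=y(0)=z(0)=v(0)=0$. An extremal is a trajectory with control $u(t)$ for which there is a nowhere vanishing absolutely continuous $\psi=(\psi_1,\dots,\psi_4)$ with a.e. $\dot\psi_1=\tfrac1{12}\psi_4yu_1-(\tfrac12\psi_3+\tfrac16\psi_4x)u_2$, $\dot\psi_2=(\tfrac12\psi_3+\tfrac1{12}\psi_4x)u_1$, $\dot\psi_3=\tfrac12\psi_4u_1$, $\dot\psi_4=0$ and $h_1u_1(t)+h_2u_2(t)=\max_{u\in U}(h_1u_1+h_2u_2)=M$ a.e., with $h_1=\psi_1-\tfrac12\psi_3y-\tfrac1{12}\psi_4xy-\tfrac12\psi_4z$, $h_2=\psi_2+\tfrac12\psi_3x+\tfrac1{12}\psi_4x^2$, $M\ge0$ constant; normal means $M>0$, normalized to $M=1$. $\varphi_i=\psi_i(0)$. $F_U(h)=\max_{u\in U}h\cdot u$, $U^*=\{h:F_U(h)\le1\}$; $r(\theta)>0$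 with $F_U(r(\theta)\cos\theta,r(\theta)\sin\theta)=1$ is the polar equation of $\partial U^*$. For $M=1$, $\theta(t)$ is a continuous function with $(h_1(t),h_2(t))=r(\theta(t))(\cos\theta(t),\sin\theta(t))$. *)

theory Defs
  imports "HOL-Analysis.Analysis"
begin

definition is_norm2 :: "(real \<times> real \<Rightarrow> real) \<Rightarrow> bool" where
  "is_norm2 F \<longleftrightarrow>
     (\<forall>a. F a \<ge> 0) \<and> (\<forall>a. F a = 0 \<longleftrightarrow> a = 0) \<and>
     (\<forall>c a. F (c *\<^sub>R a) = \<bar>c\<bar> * F a) \<and> (\<forall>a b. F (a + b) \<le> F a + F b)"

definition FU :: "(real \<times> real \<Rightarrow> real) \<Rightarrow> real \<times> real \<Rightarrow> real" where
  "FU F h = (SUP u\<in>{u. F u \<le> 1}. fst h * fst u + snd h * snd u)"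

text \<open>Polar equation \<open>r(\<theta>)\<close> of the boundary of \<open>U^*\<close>.\<close>
definition polar_r :: "(real \<times> real \<Rightarrow> real) \<Rightarrow> real \<Rightarrow> real" where
  "polar_r F \<theta> = (THE r. r > 0 \<and> FU F (r * cos \<theta>, r * sin \<theta>) = 1)"

text \<open>Absolutely continuous function on the interval \<open>I \<ni> 0\<close> with a.e. derivative \<open>g\<close>,
  written in integral form: \<open>f t = f 0 + \<integral>_0^t g\<close> (oriented) for all \<open>t \<in> I\<close>.\<close>
definition int_sol :: "real set \<Rightarrow> (real \<Rightarrow> real) \<Rightarrow> (real \<Rightarrow> real) \<Rightarrow> bool" where
  "int_sol I f g \<longleftrightarrow>
     (\<forall>t\<in>I. interval_lebesgue_integrable lborel (ereal 0) (ereal t) g \<and>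
             f t = f 0 + (LBINT s=ereal 0..ereal t. g s))"

definition h1 :: "(real \<Rightarrow> real) \<Rightarrow> (real \<Rightarrow> real) \<Rightarrow> (real \<Rightarrow> real) \<Rightarrow> (real \<Rightarrow> real)
   \<Rightarrow> (real \<Rightarrow> real) \<Rightarrow> (real \<Rightarrow> real) \<Rightarrow> real \<Rightarrow> real" where
  "h1 x y z p1 p3 p4 t = p1 t - 1/2 * p3 t * y t - 1/12 * p4 t * x t * y t - 1/2 * p4 t * z t"

definition h2 :: "(real \<Rightarrow> real) \<Rightarrow> (real \<Rightarrow> real) \<Rightarrow> (real \<Rightarrow> real)
   \<Rightarrow> (real \<Rightarrow> real) \<Rightarrow> real \<Rightarrow> real" where
  "h2 x p2 p3 p4 t = p2 t + 1/2 * p3 t * x t + 1/12 * p4 t * (x t)\<^sup>2"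

text \<open>Normal extremal (\<open>M = 1\<close>) on the time interval \<open>I\<close> (containing 0), with control \<open>u\<close>,
  trajectory \<open>(x,y,z,v)\<close> starting at the identity, and adjoint \<open>\<psi> = (p1,p2,p3,p4)\<close>.\<close>
definition normal_extremal ::
  "(real \<times> real \<Rightarrow> real) \<Rightarrow> real set \<Rightarrow> (real \<Rightarrow> real \<times> real)
   \<Rightarrow> (real \<Rightarrow> real) \<Rightarrow> (real \<Rightarrow> real) \<Rightarrow> (real \<Rightarrow> real) \<Rightarrow> (real \<Rightarrow> real)
   \<Rightarrow> (real \<Rightarrow> real) \<Rightarrow> (real \<Rightarrow> real) \<Rightarrow> (real \<Rightarrow> real) \<Rightarrow> (real \<Rightarrow> real) \<Rightarrow> bool" where
  "normal_extremal F I u x y z v p1 p2 p3 p4 \<longleftrightarrow>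
     is_interval I \<and> 0 \<in> I \<and>
     u \<in> borel_measurable lborel \<and> (\<forall>t\<in>I. F (u t) \<le> 1) \<and>
     x 0 = 0 \<and> y 0 = 0 \<and> z 0 = 0 \<and> v 0 = 0 \<and>
     int_sol I x (\<lambda>t. fst (u t)) \<and>
     int_sol I y (\<lambda>t. snd (u t)) \<and>
     int_sol I z (\<lambda>t. 1/2 * (x t * snd (u t) - y t * fst (u t))) \<and>
     int_sol I v (\<lambda>t. - 1/2 * (z t + 1/6 * x t * y t) * fst (u t) + 1/12 * (x t)\<^sup>2 * snd (u t)) \<and>
     int_sol I p1 (\<lambda>t. 1/12 * p4 t * y t * fst (u t) - (1/2 * p3 t + 1/6 * p4 t * x t) * snd (u t)) \<and>
     int_sol I p2 (\<lambda>t. (1/2 * p3 t + 1/12 * p4 t * x t) * fst (u t)) \<and>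
     int_sol I p3 (\<lambda>t. 1/2 * p4 t * fst (u t)) \<and>
     int_sol I p4 (\<lambda>t. 0) \<and>
     (\<forall>t\<in>I. (p1 t, p2 t, p3 t, p4 t) \<noteq> (0, 0, 0, 0)) \<and>
     (AE t in lborel. t \<in> I \<longrightarrow>
        h1 x y z p1 p3 p4 t * fst (u t) + h2 x p2 p3 p4 t * snd (u t) = 1 \<and>
        FU F (h1 x y z p1 p3 p4 t, h2 x p2 p3 p4 t) = 1)"

end

theory Submission
  imports Defs
begin


lemma core_pr:
  fixes a b :: "real \<Rightarrow> real" and c d :: real
  assumes cd: "c \<le> d"
    and ia: "set_integrable lborel {c..d} a" and ib: "set_integrable lborel {c..d} b"
  shows "set_integrable lborel {c..d} (\<lambda>s. a s * (LBINT r:{c..s}. b r))"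
    and "set_integrable lborel {c..d} (\<lambda>s. (LBINT r:{c..s}. a r) * b s)"
    and "(LBINT r:{c..d}. a r) * (LBINT r:{c..d}. b r) =
          (LBINT s:{c..d}. a s * (LBINT r:{c..s}. b r)) + (LBINT s:{c..d}. (LBINT r:{c..s}. a r) * b s)"
proof -
  define ai where "ai = (\<lambda>r. indicator {c..d} r * a r)"
  define bi where "bi = (\<lambda>r. indicator {c..d} r * b r)"
  have iai: "integrable lborel ai" using ia unfolding ai_def set_integrable_def by simp
  have ibi: "integrable lborel bi" using ib unfolding bi_def set_integrable_def by simp
  have [measurable]: "ai \<in> borel_measurable lborel" "bi \<in> borel_measurable lborel"
    using iai ibi by auto
  have [measurable]: "ai \<in> borel_measurable borel" "bi \<in> borel_measurable borel"
    using iai ibi by auto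
  define h where "h = (\<lambda>(r::real,s::real). ai r * bi s)"
  have hm[measurable]: "h \<in> borel_measurable (lborel \<Otimes>\<^sub>M lborel)"
    unfolding h_def by measurable
  have ih: "integrable (lborel \<Otimes>\<^sub>M lborel) h"
  proof (rule lborel_pair.Fubini_integrable[OF hm])
    have "(\<lambda>x. \<integral>y. norm (h (x, y)) \<partial>lborel) = (\<lambda>x. \<bar>ai x\<bar> * (\<integral>y. \<bar>bi y\<bar> \<partial>lborel))"
      by (auto simp: h_def abs_mult)
    then show "integrable lborel (\<lambda>x. \<integral>y. norm (h (x, y)) \<partial>lborel)"
      using iai by simp
    show "AE x in lborel. integrable lborel (\<lambda>y. h (x, y))"
      using ibi by (auto simp: h_def)
  qed
  define h1 where "h1 = (\<lambda>(r::real,s::real). if r \<le> s then ai r * bi s else 0)"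
  define h2 where "h2 = (\<lambda>(r::real,s::real). if s < r then ai r * bi s else 0)"
  have h1m[measurable]: "h1 \<in> borel_measurable (lborel \<Otimes>\<^sub>M lborel)"
    unfolding h1_def by measurable
  have h2m[measurable]: "h2 \<in> borel_measurable (lborel \<Otimes>\<^sub>M lborel)"
    unfolding h2_def by measurable
  have ih1: "integrable (lborel \<Otimes>\<^sub>M lborel) h1"
    by (rule Bochner_Integration.integrable_bound[OF ih h1m]) (auto simp: h1_def h_def)
  have ih2: "integrable (lborel \<Otimes>\<^sub>M lborel) h2"
    by (rule Bochner_Integration.integrable_bound[OF ih h2m]) (auto simp: h2_def h_def)
  define A where "A = (\<lambda>s. LBINT r:{c..s}. a r)"
  define B where "B = (\<lambda>s. LBINT r:{c..s}. b r)"
  have in1: "(\<integral>r. h1 (r,s) \<partial>lborel) = indicator {c..d} s * (A s * b s)" for s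
  proof (cases "s \<in> {c..d}")
    case True
    then have "(\<lambda>r. h1 (r,s)) = (\<lambda>r. bi s * (indicator {c..s} r * a r))"
      by (auto simp: h1_def ai_def bi_def indicator_def fun_eq_iff)
    then show ?thesis using True
      by (simp add: A_def bi_def set_lebesgue_integral_def)
  next
    case False
    then have "(\<lambda>r. h1 (r,s)) = (\<lambda>r. 0)"
      by (auto simp: h1_def ai_def bi_def indicator_def fun_eq_iff)
    then show ?thesis using False by simp
  qed
  have in2: "(\<integral>s. h2 (r,s) \<partial>lborel) = indicator {c..d} r * (a r * B r)" for r
  proof (cases "r \<in> {c..d}")
    case True
    then have "(\<lambda>s. h2 (r,s)) = (\<lambda>s. ai r * (indicator {c..<r} s * b s))"
      by (auto simp: h2_def ai_def bi_def indicator_def fun_eq_iff)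
    moreover have "(LBINT s:{c..<r}. b s) = B r"
      unfolding B_def
      by (rule set_integral_discrete_difference[where X="{r}"]) auto
    ultimately show ?thesis using True
      by (simp add: ai_def set_lebesgue_integral_def)
  next
    case False
    then have "(\<lambda>s. h2 (r,s)) = (\<lambda>s. 0)"
      by (auto simp: h2_def ai_def bi_def indicator_def fun_eq_iff)
    then show ?thesis using False by simp
  qed
  have E1: "integrable lborel (\<lambda>s. \<integral>r. h1 (r,s) \<partial>lborel)"
    "(\<integral>s. (\<integral>r. h1 (r,s) \<partial>lborel) \<partial>lborel) = integral\<^sup>L (lborel \<Otimes>\<^sub>M lborel) h1"
    using lborel_pair.integrable_snd[of "\<lambda>r s. h1 (r,s)"] lborel_pair.integral_snd[of "\<lambda>r s. h1 (r,s)"] ih1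
    by auto
  have E2: "integrable lborel (\<lambda>r. \<integral>s. h2 (r,s) \<partial>lborel)"
    "(\<integral>r. (\<integral>s. h2 (r,s) \<partial>lborel) \<partial>lborel) = integral\<^sup>L (lborel \<Otimes>\<^sub>M lborel) h2"
    using lborel_pair.integrable_fst[of "\<lambda>r s. h2 (r,s)"] lborel_pair.integral_fst[of "\<lambda>r s. h2 (r,s)"] ih2
    by auto
  have E0: "(\<integral>r. (\<integral>s. h (r,s) \<partial>lborel) \<partial>lborel) = integral\<^sup>L (lborel \<Otimes>\<^sub>M lborel) h"
    using lborel_pair.integral_fst[of "\<lambda>r s. h (r,s)"] ih by auto
  have "(\<integral>r. (\<integral>s. h (r,s) \<partial>lborel) \<partial>lborel) = (\<integral>r. ai r * (\<integral>s. bi s \<partial>lborel) \<partial>lborel)"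
    by (simp add: h_def)
  also have "\<dots> = (\<integral>r. ai r \<partial>lborel) * (\<integral>s. bi s \<partial>lborel)"
    by simp
  finally have E0': "integral\<^sup>L (lborel \<Otimes>\<^sub>M lborel) h = (LBINT r:{c..d}. a r) * (LBINT r:{c..d}. b r)"
    using E0 by (simp add: ai_def bi_def set_lebesgue_integral_def)
  have hsplit: "h = (\<lambda>p. h1 p + h2 p)"
    by (auto simp: h_def h1_def h2_def fun_eq_iff)
  have SPL: "integral\<^sup>L (lborel \<Otimes>\<^sub>M lborel) h = integral\<^sup>L (lborel \<Otimes>\<^sub>M lborel) h1 + integral\<^sup>L (lborel \<Otimes>\<^sub>M lborel) h2"
    unfolding hsplit using ih1 ih2 by simp
  show "set_integrable lborel {c..d} (\<lambda>s. a s * (LBINT r:{c..s}. b r))"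
    using E2(1) unfolding in2 set_integrable_def B_def by simp
  show "set_integrable lborel {c..d} (\<lambda>s. (LBINT r:{c..s}. a r) * b s)"
    using E1(1) unfolding in1 set_integrable_def A_def by simp
  show "(LBINT r:{c..d}. a r) * (LBINT r:{c..d}. b r) =
          (LBINT s:{c..d}. a s * (LBINT r:{c..s}. b r)) + (LBINT s:{c..d}. (LBINT r:{c..s}. a r) * b s)"
    using E0' E1(2) E2(2) SPL unfolding in1 in2
    by (simp add: set_lebesgue_integral_def A_def B_def)
qed

lemma conv_int:
  fixes a b :: real
  assumes "a \<le> b"
  shows "interval_lebesgue_integrable lborel (ereal a) (ereal b) g = set_integrable lborel {a..b} g"
  using assms unfolding interval_lebesgue_integrable_def
  apply simp
  apply (rule set_integrable_discrete_difference[where X="{a,b}"])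
  apply auto
  done

lemma set_integral_split3:
  fixes p q r :: real and g :: "real \<Rightarrow> real"
  assumes "p \<le> q" "q \<le> r" "set_integrable lborel {p..r} g"
  shows "(LBINT x:{p..r}. g x) = (LBINT x:{p..q}. g x) + (LBINT x:{q..r}. g x)"
proof -
  have m1: "min (ereal p) (min (ereal q) (ereal r)) = ereal p" using assms by (auto simp: min_def)
  have m2: "max (ereal p) (max (ereal q) (ereal r)) = ereal r" using assms by (auto simp: max_def)
  have i: "interval_lebesgue_integrable lborel (min (ereal p) (min (ereal q) (ereal r))) (max (ereal p) (max (ereal q) (ereal r))) g"
    unfolding m1 m2 using assms conv_int[of p r g] by linarith
  have "(LBINT x=ereal p..ereal q. g x) + (LBINT x=ereal q..ereal r. g x) = (LBINT x=ereal p..ereal r. g x)"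
    by (rule interval_integral_sum[OF i])
  moreover have "(LBINT x=ereal p..ereal q. g x) = (LBINT x:{p..q}. g x)" by (rule interval_integral_Icc) (use assms in simp)
  moreover have "(LBINT x=ereal q..ereal r. g x) = (LBINT x:{q..r}. g x)" by (rule interval_integral_Icc) (use assms in simp)
  moreover have "(LBINT x=ereal p..ereal r. g x) = (LBINT x:{p..r}. g x)" by (rule interval_integral_Icc) (use assms in simp)
  ultimately show ?thesis by simp
qed
definition seg_sol :: "real set \<Rightarrow> (real \<Rightarrow> real) \<Rightarrow> (real \<Rightarrow> real) \<Rightarrow> bool" where
  "seg_sol I f g \<longleftrightarrow> (\<forall>a\<in>I. \<forall>b\<in>I. a \<le> b \<longrightarrow>
      set_integrable lborel {a..b} g \<and> f b - f a = (LBINT x:{a..b}. g x))"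

lemma int_sol_seg:
  assumes I: "is_interval I" "0 \<in> I" and s: "int_sol I f g"
  shows "seg_sol I f g"
  unfolding seg_sol_def
proof (intro ballI impI)
  have pos: "set_integrable lborel {0..t} g \<and> f t = f 0 + (LBINT x:{0..t}. g x)" if "t \<in> I" "0 \<le> t" for t
  proof -
    have h: "interval_lebesgue_integrable lborel (ereal 0) (ereal t) g" "f t = f 0 + (LBINT s=ereal 0..ereal t. g s)"
      using s that unfolding int_sol_def by blast+
    have "(LBINT s=ereal 0..ereal t. g s) = (LBINT x:{0..t}. g x)"
      using interval_integral_Icc[of 0 t g] that by simp
    moreover have "set_integrable lborel {0..t} g" using h(1) conv_int[of 0 t g] that by blast
    ultimately show ?thesis using h(2) by simp
  qed
  have neg: "set_integrable lborel {t..0} g \<and> f t = f 0 - (LBINT x:{t..0}. g x)" if "t \<in> I" "t \<le> 0" for t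
  proof -
    have h: "interval_lebesgue_integrable lborel (ereal 0) (ereal t) g" "f t = f 0 + (LBINT s=ereal 0..ereal t. g s)"
      using s that unfolding int_sol_def by blast+
    have h2: "interval_lebesgue_integrable lborel (ereal t) (ereal 0) g"
      using h(1) interval_integrable_endpoints_reverse by blast
    have "(LBINT s=ereal 0..ereal t. g s) = - (LBINT s=ereal t..ereal 0. g s)"
      by (rule interval_integral_endpoints_reverse)
    also have "(LBINT s=ereal t..ereal 0. g s) = (LBINT x:{t..0}. g x)"
      using interval_integral_Icc[of t 0 g] that by simp
    finally have e: "(LBINT s=ereal 0..ereal t. g s) = - (LBINT x:{t..0}. g x)" .
    have "set_integrable lborel {t..0} g" using h2 conv_int[of t 0 g] that by blast
    moreover have "f t = f 0 - (LBINT x:{t..0}. g x)" using h(2) e by linarith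
    ultimately show ?thesis by blast
  qed
  fix a b assume ab: "a \<in> I" "b \<in> I" "a \<le> b"
  show "set_integrable lborel {a..b} g \<and> f b - f a = (LBINT x:{a..b}. g x)"
  proof (cases "0 \<le> a")
    case True
    have pa: "f a = f 0 + (LBINT x:{0..a}. g x)" using pos[of a] ab True by blast
    have pb: "set_integrable lborel {0..b} g" "f b = f 0 + (LBINT x:{0..b}. g x)" using pos[of b] ab True by auto
    have ii: "set_integrable lborel {a..b} g"
      by (rule set_integrable_subset[OF pb(1)]) (use True in auto)
    have "(LBINT x:{0..b}. g x) = (LBINT x:{0..a}. g x) + (LBINT x:{a..b}. g x)"
      by (rule set_integral_split3) (use True ab pb in auto)
    with pa pb ii show ?thesis by linarith
  next
    case False
    show ?thesis
    proof (cases "b \<le> 0")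
      case True
      have pa: "set_integrable lborel {a..0} g" "f a = f 0 - (LBINT x:{a..0}. g x)" using neg[of a] ab True by auto
      have pb: "f b = f 0 - (LBINT x:{b..0}. g x)" using neg[of b] ab True by blast
      have ii: "set_integrable lborel {a..b} g"
        by (rule set_integrable_subset[OF pa(1)]) (use True in auto)
      have "(LBINT x:{a..0}. g x) = (LBINT x:{a..b}. g x) + (LBINT x:{b..0}. g x)"
        by (rule set_integral_split3) (use True ab pa in auto)
      with pa pb ii show ?thesis by linarith
    next
      case F2: False
      have pa: "set_integrable lborel {a..0} g" "f a = f 0 - (LBINT x:{a..0}. g x)" using neg[of a] ab False by auto
      have pb: "set_integrable lborel {0..b} g" "f b = f 0 + (LBINT x:{0..b}. g x)" using pos[of b] ab F2 by auto
      have "set_integrable lborel ({a..0} \<union> {0..b}) g"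
        using pa pb by (intro set_integrable_Un) auto
      moreover have "{a..0} \<union> {0..b} = {a..b}" using False F2 by auto
      ultimately have ii: "set_integrable lborel {a..b} g" by simp
      have "(LBINT x:{a..b}. g x) = (LBINT x:{a..0}. g x) + (LBINT x:{0..b}. g x)"
        by (rule set_integral_split3) (use False F2 ii in auto)
      with pa pb ii show ?thesis by linarith
    qed
  qed
qed

lemma seg_sol_D:
  "seg_sol I f g \<Longrightarrow> a \<in> I \<Longrightarrow> b \<in> I \<Longrightarrow> a \<le> b \<Longrightarrow>
     set_integrable lborel {a..b} g \<and> f b - f a = (LBINT x:{a..b}. g x)"
  unfolding seg_sol_def by blast

lemma interval_sub:
  fixes I :: "real set"
  assumes "is_interval I" "a \<in> I" "b \<in> I"
  shows "{a..b} \<subseteq> I"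
proof
  fix x assume "x \<in> {a..b}"
  then have "a \<le> x" "x \<le> b" by auto
  then show "x \<in> I" using assms unfolding is_interval_1 by blast
qed

lemma seg_sol_cont:
  assumes I: "is_interval I" and s: "seg_sol I f g" and ab: "a \<in> I" "b \<in> I" "a \<le> b"
  shows "continuous_on {a..b} f"
proof -
  have sub: "{a..b} \<subseteq> I" using interval_sub[OF I ab(1,2)] .
  have gi: "g integrable_on {a..b}"
    using seg_sol_D[OF s ab] set_borel_integral_eq_integral(1) by blast
  have "continuous_on {a..b} (\<lambda>t. integral {a..t} g)"
    by (rule indefinite_integral_continuous_1[OF gi])
  then have c: "continuous_on {a..b} (\<lambda>t. f a + integral {a..t} g)"
    by (rule continuous_on_add[OF continuous_on_const])
  have e: "f a + integral {a..t} g = f t" if "t \<in> {a..b}" for t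
  proof -
    have tI: "t \<in> I" using sub that by blast
    have at: "a \<le> t" using that by simp
    have "set_integrable lborel {a..t} g" "f t - f a = (LBINT x:{a..t}. g x)"
      using seg_sol_D[OF s ab(1) tI at] by blast+
    moreover have "(LBINT x:{a..t}. g x) = integral {a..t} g"
      using set_borel_integral_eq_integral(2) calculation(1) by blast
    ultimately show ?thesis by linarith
  qed
  show ?thesis by (rule continuous_on_eq[OF c e])
qed


lemma seg_sol_add:
  assumes "seg_sol I f a" "seg_sol I g b"
  shows "seg_sol I (\<lambda>t. f t + g t) (\<lambda>t. a t + b t)"
  unfolding seg_sol_def
proof (intro ballI impI)
  fix c d assume cd: "c \<in> I" "d \<in> I" "c \<le> d"
  from seg_sol_D[OF assms(1) cd] seg_sol_D[OF assms(2) cd]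
  have h: "set_integrable lborel {c..d} a" "f d - f c = (LBINT x:{c..d}. a x)"
      "set_integrable lborel {c..d} b" "g d - g c = (LBINT x:{c..d}. b x)" by blast+
  show "set_integrable lborel {c..d} (\<lambda>t. a t + b t) \<and> f d + g d - (f c + g c) = (LBINT x:{c..d}. a x + b x)"
    using set_integral_add[OF h(1) h(3)] h(2,4) by simp
qed

lemma seg_sol_cmult:
  assumes "seg_sol I f a"
  shows "seg_sol I (\<lambda>t. k * f t) (\<lambda>t. k * a t)"
  unfolding seg_sol_def
proof (intro ballI impI)
  fix c d assume cd: "c \<in> I" "d \<in> I" "c \<le> d"
  from seg_sol_D[OF assms(1) cd]
  have h: "set_integrable lborel {c..d} a" "f d - f c = (LBINT x:{c..d}. a x)" by blast+
  show "set_integrable lborel {c..d} (\<lambda>t. k * a t) \<and> k * f d - k * f c = (LBINT x:{c..d}. k * a x)"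
    using h by (simp add: right_diff_distrib[symmetric])
qed

lemma seg_sol_const:
  shows "seg_sol I (\<lambda>t. k) (\<lambda>t. 0)"
  unfolding seg_sol_def by (simp add: set_integrable_def)

lemma seg_sol_cong:
  assumes I: "is_interval I" and s: "seg_sol I f a"
    and e1: "\<And>t. t \<in> I \<Longrightarrow> f t = g t" and e2: "\<And>t. t \<in> I \<Longrightarrow> a t = b t"
  shows "seg_sol I g b"
  unfolding seg_sol_def
proof (intro ballI impI)
  fix c d assume cd: "c \<in> I" "d \<in> I" "c \<le> d"
  from seg_sol_D[OF s cd]
  have h: "set_integrable lborel {c..d} a" "f d - f c = (LBINT x:{c..d}. a x)" by blast+
  have sub: "{c..d} \<subseteq> I" by (rule interval_sub[OF I cd(1,2)])
  have "set_integrable lborel {c..d} a = set_integrable lborel {c..d} b"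
    by (rule set_integrable_cong) (use sub e2 in auto)
  moreover have "(LBINT x:{c..d}. a x) = (LBINT x:{c..d}. b x)"
    by (rule set_lebesgue_integral_cong) (use sub e2 in auto)
  ultimately show "set_integrable lborel {c..d} b \<and> g d - g c = (LBINT x:{c..d}. b x)"
    using h e1[OF cd(1)] e1[OF cd(2)] by simp
qed

lemma seg_sol_unique:
  assumes s1: "seg_sol I f a" and s2: "seg_sol I g a" and st: "s \<in> I" "t \<in> I"
  shows "f t - f s = g t - g s"
proof (cases "s \<le> t")
  case True
  then show ?thesis using seg_sol_D[OF s1 st True] seg_sol_D[OF s2 st True] by simp
next
  case False
  then have "t \<le> s" by simp
  then show ?thesis using seg_sol_D[OF s1 st(2,1)] seg_sol_D[OF s2 st(2,1)] by simp
qed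

lemma seg_sol_mult:
  assumes I: "is_interval I" and sf: "seg_sol I f a" and sg: "seg_sol I g b"
  shows "seg_sol I (\<lambda>t. f t * g t) (\<lambda>t. a t * g t + f t * b t)"
    and "\<And>c d. c \<in> I \<Longrightarrow> d \<in> I \<Longrightarrow> c \<le> d \<Longrightarrow> set_integrable lborel {c..d} (\<lambda>t. a t * g t)"
    and "\<And>c d. c \<in> I \<Longrightarrow> d \<in> I \<Longrightarrow> c \<le> d \<Longrightarrow> set_integrable lborel {c..d} (\<lambda>t. f t * b t)"
proof -
  { fix c d assume cd: "c \<in> I" "d \<in> I" "c \<le> d"
    have sub: "{c..d} \<subseteq> I" by (rule interval_sub[OF I cd(1,2)])
    from seg_sol_D[OF sf cd] have ha: "set_integrable lborel {c..d} a" "f d - f c = (LBINT x:{c..d}. a x)" by blast+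
    from seg_sol_D[OF sg cd] have hb: "set_integrable lborel {c..d} b" "g d - g c = (LBINT x:{c..d}. b x)" by blast+
    have Fs: "(LBINT r:{c..s}. a r) = f s - f c" if "s \<in> {c..d}" for s
      using seg_sol_D[OF sf cd(1), of s] sub that by auto
    have Gs: "(LBINT r:{c..s}. b r) = g s - g c" if "s \<in> {c..d}" for s
      using seg_sol_D[OF sg cd(1), of s] sub that by auto
    note C = core_pr[OF cd(3) ha(1) hb(1)]
    have i1: "set_integrable lborel {c..d} (\<lambda>s. a s * g s - g c * a s)"
      using C(1) by (rule set_integrable_cong[THEN iffD1, rotated -1]) (auto simp: Gs algebra_simps)
    have i2: "set_integrable lborel {c..d} (\<lambda>s. f s * b s - f c * b s)"
      using C(2) by (rule set_integrable_cong[THEN iffD1, rotated -1]) (auto simp: Fs algebra_simps)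
    have ia2: "set_integrable lborel {c..d} (\<lambda>s. g c * a s)" using ha(1) by simp
    have ib2: "set_integrable lborel {c..d} (\<lambda>s. f c * b s)" using hb(1) by simp
    have iag: "set_integrable lborel {c..d} (\<lambda>s. a s * g s)"
      using set_integral_add(1)[OF i1 ia2] by simp
    have ifb: "set_integrable lborel {c..d} (\<lambda>s. f s * b s)"
      using set_integral_add(1)[OF i2 ib2] by simp
    have v1: "(LBINT s:{c..d}. a s * (LBINT r:{c..s}. b r)) = (LBINT s:{c..d}. a s * g s - g c * a s)"
      by (rule set_lebesgue_integral_cong) (auto simp: Gs algebra_simps)
    have v2: "(LBINT s:{c..d}. (LBINT r:{c..s}. a r) * b s) = (LBINT s:{c..d}. f s * b s - f c * b s)"
      by (rule set_lebesgue_integral_cong) (auto simp: Fs algebra_simps)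
    have v1': "(LBINT s:{c..d}. a s * g s - g c * a s) = (LBINT s:{c..d}. a s * g s) - g c * (LBINT s:{c..d}. a s)"
      using set_integral_diff(2)[OF iag ia2] by simp
    have v2': "(LBINT s:{c..d}. f s * b s - f c * b s) = (LBINT s:{c..d}. f s * b s) - f c * (LBINT s:{c..d}. b s)"
      using set_integral_diff(2)[OF ifb ib2] by simp
    have S: "(LBINT s:{c..d}. a s * g s + f s * b s) = (LBINT s:{c..d}. a s * g s) + (LBINT s:{c..d}. f s * b s)"
      using set_integral_add(2)[OF iag ifb] .
    have key: "(f d - f c) * (g d - g c) = ((LBINT s:{c..d}. a s * g s) - g c * (f d - f c)) + ((LBINT s:{c..d}. f s * b s) - f c * (g d - g c))"
      using C(3) v1 v2 v1' v2' ha(2) hb(2) by simp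
    have "f d * g d - f c * g c = (LBINT s:{c..d}. a s * g s + f s * b s)"
      unfolding S using key by (simp add: algebra_simps)
    note this iag ifb set_integral_add(1)[OF iag ifb] }
  note R = this
  show "seg_sol I (\<lambda>t. f t * g t) (\<lambda>t. a t * g t + f t * b t)"
    unfolding seg_sol_def using R by blast
  show "\<And>c d. c \<in> I \<Longrightarrow> d \<in> I \<Longrightarrow> c \<le> d \<Longrightarrow> set_integrable lborel {c..d} (\<lambda>t. a t * g t)"
    using R by blast
  show "\<And>c d. c \<in> I \<Longrightarrow> d \<in> I \<Longrightarrow> c \<le> d \<Longrightarrow> set_integrable lborel {c..d} (\<lambda>t. f t * b t)"
    using R by blast
qed

lemma set_int_ae_one:
  fixes g :: "real \<Rightarrow> real"
  assumes cd: "c \<le> d" and i: "set_integrable lborel {c..d} g"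
    and ae: "AE t in lborel. t \<in> {c..d} \<longrightarrow> g t = 1"
  shows "(LBINT x:{c..d}. g x) = d - c"
proof -
  have m: "(\<lambda>x. indicator {c..d} x *\<^sub>R g x) \<in> borel_measurable lborel"
    using i unfolding set_integrable_def by auto
  have "(LBINT x:{c..d}. g x) = (LBINT x. indicator {c..d} x *\<^sub>R (1::real))"
    unfolding set_lebesgue_integral_def
    by (rule integral_cong_AE[OF m]) (use ae in \<open>auto split: split_indicator\<close>)
  also have "\<dots> = d - c" using cd by simp
  finally show ?thesis .
qed


lemma J_between:
  fixes J :: "real set"
  assumes J: "is_interval J" and t0: "t0 \<in> closure J" and t: "t \<in> J"
    and r: "(t0 < r \<and> r < t) \<or> (t < r \<and> r < t0)"
  shows "r \<in> J"
proof -
  have e: "\<bar>r - t0\<bar> > 0" using r by auto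
  obtain a where a: "a \<in> J" "dist a t0 < \<bar>r - t0\<bar>"
    using t0 e unfolding closure_approachable by blast
  have ad: "\<bar>a - t0\<bar> < \<bar>r - t0\<bar>" using a(2) by (simp add: dist_real_def)
  show ?thesis
  proof (cases "t0 < r \<and> r < t")
    case True
    then have "a \<le> r" "r \<le> t" using ad by auto
    then show ?thesis using J a(1) t unfolding is_interval_1 by blast
  next
    case False
    then have "t < r" "r < t0" using r by auto
    then have "t \<le> r" "r \<le> a" using ad by auto
    then show ?thesis using J a(1) t unfolding is_interval_1 by blast
  qed
qed

lemma J_geom:
  fixes I J :: "real set"
  assumes I: "is_interval I" "0 \<in> I" and JI: "J \<subseteq> I" and J: "is_interval J"
    and t0: "t0 \<in> closure J" and cl: "\<forall>s\<in>closure J. \<bar>t0\<bar> \<le> \<bar>s\<bar>"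
  shows "is_interval (insert t0 J)" "insert t0 J \<subseteq> I"
proof -
  show "is_interval (insert t0 J)"
    unfolding is_interval_1
  proof (intro ballI allI impI)
    fix a b x assume ab: "a \<in> insert t0 J" "b \<in> insert t0 J" and x: "a \<le> x \<and> x \<le> b"
    show "x \<in> insert t0 J"
    proof (cases "x = t0 \<or> x = a \<or> x = b")
      case True then show ?thesis using ab by auto
    next
      case False
      then have x2: "a < x" "x < b" "x \<noteq> t0" using x by auto
      show ?thesis
      proof (cases "a = t0")
        case True
        then have "b \<in> J" using ab x2 by auto
        then show ?thesis using J_between[OF J t0, of b x] True x2 by auto
      next
        case F1: False
        then have aJ: "a \<in> J" using ab by auto
        show ?thesis
        proof (cases "b = t0")
          case True
          then show ?thesis using J_between[OF J t0 aJ, of x] True x2 by auto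
        next
          case False
          then have "b \<in> J" using ab by auto
          then show ?thesis using J aJ x unfolding is_interval_1 by blast
        qed
      qed
    qed
  qed
  have "t0 \<in> I"
  proof (cases "t0 \<in> J")
    case True then show ?thesis using JI by auto
  next
    case False
    have "J \<noteq> {}" using t0 by auto
    then obtain t where t: "t \<in> J" by auto
    have tI: "t \<in> I" using t JI by auto
    have tt: "\<bar>t0\<bar> \<le> \<bar>t\<bar>" using cl t closure_subset by blast
    have "min 0 t \<le> t0 \<and> t0 \<le> max 0 t"
    proof (rule ccontr)
      assume nb: "\<not> (min 0 t \<le> t0 \<and> t0 \<le> max 0 t)"
      have "(t0 < 0 \<and> 0 < t) \<or> (t < 0 \<and> 0 < t0)" using nb tt by auto
      then have "0 \<in> J" using J_between[OF J t0 t, of 0] by auto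
      then have "\<bar>t0\<bar> \<le> 0" using cl closure_subset by fastforce
      then show False using nb tt by auto
    qed
    moreover have "{min 0 t..max 0 t} \<subseteq> I"
      by (rule interval_sub[OF I(1)]) (use I(2) tI in \<open>auto simp: min_def max_def\<close>)
    ultimately show ?thesis by auto
  qed
  then show "insert t0 J \<subseteq> I" using JI by auto
qed


lemma seg_sol_mono: "seg_sol I f g \<Longrightarrow> K \<subseteq> I \<Longrightarrow> seg_sol K f g"
  unfolding seg_sol_def by blast

lemma seg_sol_zero:
  assumes K: "is_interval K" and s: "seg_sol K F D" and z: "\<And>t. t \<in> K \<Longrightarrow> D t = 0"
    and ab: "a \<in> K" "b \<in> K"
  shows "F b = F a"
proof -
  have "seg_sol K F (\<lambda>t. 0)" by (rule seg_sol_cong[OF K s]) (use z in auto)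
  from seg_sol_unique[OF this seg_sol_const ab] show ?thesis by simp
qed

lemma quad_contra:
  fixes a b f3 f4 :: real
  assumes f4: "f4 \<noteq> 0" and ab: "a \<noteq> b"
    and e1: "f3 * a + f4 / 2 * a^2 = f3 * b + f4 / 2 * b^2"
    and e2: "f3 * ((a+b)/2) + f4 / 2 * ((a+b)/2)^2 = f3 * a + f4 / 2 * a^2"
  shows False
proof -
  have i1: "(a - b) * (f3 + f4 / 2 * (a + b)) = (f3 * a + f4 / 2 * a^2) - (f3 * b + f4 / 2 * b^2)"
    by (simp add: field_simps power2_eq_square)
  have "(a - b) * (f3 + f4 / 2 * (a + b)) = 0" using e1 i1 by simp
  then have c: "f3 = - f4 / 2 * (a + b)" using ab by simp
  have i2: "f4 / 2 * (((a+b)/2 - a) * ((a+b)/2 - b)) = (f3 * ((a+b)/2) + f4 / 2 * ((a+b)/2)^2) - (f3 * a + f4 / 2 * a^2)"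
    unfolding c by (simp add: field_simps power2_eq_square)
  have "f4 / 2 * (((a+b)/2 - a) * ((a+b)/2 - b)) = 0"
    using e2 i2 by simp
  then have "((a+b)/2 - a) * ((a+b)/2 - b) = 0" using f4 by simp
  then show False using ab by auto
qed



theorem lemma1:
  fixes F :: "real \<times> real \<Rightarrow> real"
    and I J :: "real set"
    and u :: "real \<Rightarrow> real \<times> real"
    and x y z v p1 p2 p3 p4 \<theta> :: "real \<Rightarrow> real"
    and t0 :: real
  assumes norm: "is_norm2 F"
    and ext: "normal_extremal F I u x y z v p1 p2 p3 p4"
    and phi4: "p4 0 \<noteq> 0"
    and theta_cont: "continuous_on I \<theta>"
    and theta_h: "\<forall>t\<in>I. (h1 x y z p1 p3 p4 t, h2 x p2 p3 p4 t)
                         = (polar_r F (\<theta> t) * cos (\<theta> t), polar_r F (\<theta> t) * sin (\<theta> t))"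
    and J_sub: "J \<subseteq> I"
    and J_int: "is_interval J"
    and J_nondeg: "\<exists>a\<in>J. \<exists>b\<in>J. a \<noteq> b"
    and theta_const: "\<exists>c. \<forall>t\<in>J. \<theta> t = c"
    and t0_closure: "t0 \<in> closure J"
    and t0_closest: "\<forall>s\<in>closure J. \<bar>t0\<bar> \<le> \<bar>s\<bar>"
  shows "(\<forall>t\<in>J.
            x t = - p3 0 / p4 0 \<and>
            y t = y t0 + 2 * p4 0 * (t - t0) / (2 * p2 0 * p4 0 - (p3 0)\<^sup>2) \<and>
            z t = z t0 + p3 0 * (t - t0) / ((p3 0)\<^sup>2 - 2 * p2 0 * p4 0) \<and>
            v t = v t0 + (p3 0)\<^sup>2 * (t - t0) / (6 * p4 0 * (2 * p2 0 * p4 0 - (p3 0)\<^sup>2)))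
       \<and> p1 0 * (- p3 0 / p4 0) + p2 0 * y t0 + (2 * p3 0 + 1/2 * p4 0 * (- p3 0 / p4 0)) * z t0
           + 3 * p4 0 * v t0 = t0
       \<and> (p3 0 = 0 \<longrightarrow>
            (\<forall>t\<in>J. x t = 0 \<and> y t = y t0 + (t - t0) / p2 0 \<and> z t = z t0 \<and>
                    v t = v t0 \<and> v t0 = (t0 - p2 0 * y t0) / (3 * p4 0)))"
proof -
  have Iint: "is_interval I" and I0: "0 \<in> I"
    using ext unfolding normal_extremal_def by blast+
  have x0: "x 0 = 0" and y0: "y 0 = 0" and z0: "z 0 = 0" and v0: "v 0 = 0"
    using ext unfolding normal_extremal_def by blast+
  have ix: "int_sol I x (\<lambda>t. fst (u t))" and iy: "int_sol I y (\<lambda>t. snd (u t))"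
    and iz: "int_sol I z (\<lambda>t. 1/2 * (x t * snd (u t) - y t * fst (u t)))"
    and iv: "int_sol I v (\<lambda>t. - 1/2 * (z t + 1/6 * x t * y t) * fst (u t) + 1/12 * (x t)\<^sup>2 * snd (u t))"
    and i1: "int_sol I p1 (\<lambda>t. 1/12 * p4 t * y t * fst (u t) - (1/2 * p3 t + 1/6 * p4 t * x t) * snd (u t))"
    and i2: "int_sol I p2 (\<lambda>t. (1/2 * p3 t + 1/12 * p4 t * x t) * fst (u t))"
    and i3: "int_sol I p3 (\<lambda>t. 1/2 * p4 t * fst (u t))"
    and i4: "int_sol I p4 (\<lambda>t. 0)"
    using ext unfolding normal_extremal_def by blast+
  have ae: "AE t in lborel. t \<in> I \<longrightarrow>
        h1 x y z p1 p3 p4 t * fst (u t) + h2 x p2 p3 p4 t * snd (u t) = 1"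
    using ext unfolding normal_extremal_def by (auto elim: AE_mp)
  note Sx = int_sol_seg[OF Iint I0 ix] and Sy = int_sol_seg[OF Iint I0 iy]
    and Sz = int_sol_seg[OF Iint I0 iz] and Sv = int_sol_seg[OF Iint I0 iv]
    and S1 = int_sol_seg[OF Iint I0 i1] and S2 = int_sol_seg[OF Iint I0 i2]
    and S3 = int_sol_seg[OF Iint I0 i3] and S4 = int_sol_seg[OF Iint I0 i4]
  define f1 where "f1 = p1 0"
  define f2 where "f2 = p2 0"
  define f3 where "f3 = p3 0"
  define f4 where "f4 = p4 0"
  have f4nz: "f4 \<noteq> 0" using phi4 f4_def by simp
  have P4: "p4 t = f4" if "t \<in> I" for t
    using seg_sol_unique[OF S4 seg_sol_const[of I f4] I0 that] f4_def by simp
  have P3: "p3 t = f3 + 1/2 * f4 * x t" if "t \<in> I" for t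
  proof -
    have A: "seg_sol I (\<lambda>t. 1/2 * f4 * x t) (\<lambda>t. 1/2 * f4 * fst (u t))"
      by (rule seg_sol_cmult[OF Sx])
    have B: "seg_sol I p3 (\<lambda>t. 1/2 * f4 * fst (u t))"
      by (rule seg_sol_cong[OF Iint S3]) (auto simp: P4)
    show ?thesis using seg_sol_unique[OF B A I0 that] x0 f3_def by simp
  qed
  note XX = seg_sol_mult[OF Iint Sx Sx]
  note XY = seg_sol_mult[OF Iint Sx Sy]
  note XZ = seg_sol_mult[OF Iint Sx Sz]
  have P2: "p2 t = f2 + 1/2 * f3 * x t + 1/6 * f4 * (x t * x t)" if "t \<in> I" for t
  proof -
    have A: "seg_sol I (\<lambda>t. 1/2 * f3 * x t + 1/6 * f4 * (x t * x t))
       (\<lambda>t. 1/2 * f3 * fst (u t) + 1/6 * f4 * (fst (u t) * x t + x t * fst (u t)))"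
      by (intro seg_sol_add seg_sol_cmult Sx XX(1))
    have B: "seg_sol I p2 (\<lambda>t. 1/2 * f3 * fst (u t) + 1/6 * f4 * (fst (u t) * x t + x t * fst (u t)))"
      by (rule seg_sol_cong[OF Iint S2]) (auto simp: P4 P3 algebra_simps)
    show ?thesis using seg_sol_unique[OF B A I0 that] x0 f2_def by simp
  qed
  have P1: "p1 t = f1 + (- 1/6 * f4) * (x t * y t) + (- 1/2 * f4) * z t + (- 1/2 * f3) * y t" if "t \<in> I" for t
  proof -
    have A: "seg_sol I (\<lambda>t. (- 1/6 * f4) * (x t * y t) + (- 1/2 * f4) * z t + (- 1/2 * f3) * y t)
       (\<lambda>t. (- 1/6 * f4) * (fst (u t) * y t + x t * snd (u t))
          + (- 1/2 * f4) * (1/2 * (x t * snd (u t) - y t * fst (u t))) + (- 1/2 * f3) * snd (u t))"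
      by (intro seg_sol_add seg_sol_cmult Sy Sz XY(1))
    have B: "seg_sol I p1 (\<lambda>t. (- 1/6 * f4) * (fst (u t) * y t + x t * snd (u t))
          + (- 1/2 * f4) * (1/2 * (x t * snd (u t) - y t * fst (u t))) + (- 1/2 * f3) * snd (u t))"
      by (rule seg_sol_cong[OF Iint S1]) (auto simp: P4 P3 algebra_simps)
    show ?thesis using seg_sol_unique[OF B A I0 that] x0 y0 z0 f1_def by simp
  qed
  have H2: "h2 x p2 p3 p4 t = f2 + f3 * x t + 1/2 * f4 * (x t)^2" if "t \<in> I" for t
    unfolding h2_def using P2[OF that] P3[OF that] P4[OF that]
    by (simp add: algebra_simps power2_eq_square)
  have H1: "h1 x y z p1 p3 p4 t = f1 - f3 * y t - 1/2 * f4 * (x t * y t) - f4 * z t" if "t \<in> I" for t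
    unfolding h1_def using P1[OF that] P3[OF that] P4[OF that]
    by (simp add: algebra_simps)
  define Qf where "Qf = (\<lambda>t. f1 * x t + f2 * y t + 2 * f3 * z t + 1/2 * f4 * (x t * z t) + 3 * f4 * v t)"
  define Hf where "Hf = (\<lambda>t. h1 x y z p1 p3 p4 t * fst (u t) + h2 x p2 p3 p4 t * snd (u t))"
  have QS: "seg_sol I Qf Hf"
  proof -
    have A: "seg_sol I Qf (\<lambda>t. f1 * fst (u t) + f2 * snd (u t) + 2 * f3 * (1/2 * (x t * snd (u t) - y t * fst (u t)))
        + 1/2 * f4 * (fst (u t) * z t + x t * (1/2 * (x t * snd (u t) - y t * fst (u t))))
        + 3 * f4 * (- 1/2 * (z t + 1/6 * x t * y t) * fst (u t) + 1/12 * (x t)\<^sup>2 * snd (u t)))"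
      unfolding Qf_def by (intro seg_sol_add seg_sol_cmult Sx Sy Sz Sv XZ(1))
    show ?thesis
      by (rule seg_sol_cong[OF Iint A]) (auto simp: Hf_def H1 H2 algebra_simps power2_eq_square)
  qed
  have Qint: "Qf b - Qf a = b - a" if "a \<in> I" "b \<in> I" "a \<le> b" for a b
  proof -
    have sub: "{a..b} \<subseteq> I" by (rule interval_sub[OF Iint that(1,2)])
    from seg_sol_D[OF QS that] have i: "set_integrable lborel {a..b} Hf" "Qf b - Qf a = (LBINT s:{a..b}. Hf s)" by blast+
    have "AE t in lborel. t \<in> {a..b} \<longrightarrow> Hf t = 1"
      using ae by eventually_elim (use sub in \<open>auto simp: Hf_def\<close>)
    from set_int_ae_one[OF that(3) i(1) this] i(2) show ?thesis by simp
  qed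
  have Q0: "Qf 0 = 0" unfolding Qf_def using x0 y0 z0 v0 by simp
  define K where "K = insert t0 J"
  have Kint: "is_interval K" and KI: "K \<subseteq> I"
    using J_geom[OF Iint I0 J_sub J_int t0_closure t0_closest] unfolding K_def by blast+
  have t0K: "t0 \<in> K" and JK: "J \<subseteq> K" unfolding K_def by auto
  have t0I: "t0 \<in> I" using KI t0K by auto
  have Qt0: "Qf t0 = t0"
  proof (cases "0 \<le> t0")
    case True then show ?thesis using Qint[OF I0 t0I] Q0 by simp
  next
    case False then show ?thesis using Qint[OF t0I I0] Q0 by simp
  qed
  obtain t1 where t1J: "t1 \<in> J" and t1ne: "t1 \<noteq> t0" using J_nondeg by metis
  have t1K: "t1 \<in> K" using t1J JK by auto
  obtain c where cJ: "\<forall>t\<in>J. \<theta> t = c" using theta_const by blast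
  define C1 where "C1 = polar_r F c * cos c"
  define C2 where "C2 = polar_r F c * sin c"
  have hJ: "h1 x y z p1 p3 p4 t = C1 \<and> h2 x p2 p3 p4 t = C2" if "t \<in> J" for t
    using theta_h J_sub cJ that unfolding C1_def C2_def by fastforce
  define a0 where "a0 = min t0 t1"
  define b0 where "b0 = max t0 t1"
  have ab0: "a0 < b0" using t1ne unfolding a0_def b0_def by auto
  have a0I: "a0 \<in> I" and b0I: "b0 \<in> I" using t0I t1J J_sub unfolding a0_def b0_def by (auto simp: min_def max_def)
  have cx: "continuous_on {a0..b0} x" by (rule seg_sol_cont[OF Iint Sx a0I b0I]) (use ab0 in simp)
  have cy: "continuous_on {a0..b0} y" by (rule seg_sol_cont[OF Iint Sy a0I b0I]) (use ab0 in simp)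
  have cz: "continuous_on {a0..b0} z" by (rule seg_sol_cont[OF Iint Sz a0I b0I]) (use ab0 in simp)
  have ext0: "g t0 = cc" if gc: "continuous_on {a0..b0} g" and gJ: "\<And>r. r \<in> J \<Longrightarrow> g r = cc" for g :: "real \<Rightarrow> real" and cc
  proof (rule continuous_constant_on_closure[of "{a0<..<b0}" g cc t0])
    show "continuous_on (closure {a0<..<b0}) g" using gc ab0 by simp
    show "t0 \<in> closure {a0<..<b0}" using ab0 unfolding a0_def b0_def by auto
    fix r assume "r \<in> {a0<..<b0}"
    then have "(t0 < r \<and> r < t1) \<or> (t1 < r \<and> r < t0)" unfolding a0_def b0_def by auto
    then have "r \<in> J" by (rule J_between[OF J_int t0_closure t1J])
    then show "g r = cc" by (rule gJ)
  qed
  have hK: "h1 x y z p1 p3 p4 t = C1 \<and> h2 x p2 p3 p4 t = C2" if "t \<in> K" for t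
  proof (cases "t \<in> J")
    case True then show ?thesis by (rule hJ)
  next
    case False
    then have tt: "t = t0" using that unfolding K_def by auto
    have "(\<lambda>t. f1 - f3 * y t - 1/2 * f4 * (x t * y t) - f4 * z t) t0 = C1"
    proof (rule ext0)
      show "continuous_on {a0..b0} (\<lambda>t. f1 - f3 * y t - 1/2 * f4 * (x t * y t) - f4 * z t)"
        by (intro continuous_intros cx cy cz)
      fix r assume r: "r \<in> J"
      then have rI: "r \<in> I" using J_sub by auto
      show "(\<lambda>t. f1 - f3 * y t - 1/2 * f4 * (x t * y t) - f4 * z t) r = C1"
        using H1[OF rI] hJ[OF r] by simp
    qed
    moreover have "(\<lambda>t. f2 + f3 * x t + 1/2 * f4 * (x t)^2) t0 = C2"
    proof (rule ext0)
      show "continuous_on {a0..b0} (\<lambda>t. f2 + f3 * x t + 1/2 * f4 * (x t)^2)"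
        by (intro continuous_intros cx)
      fix r assume r: "r \<in> J"
      then have rI: "r \<in> I" using J_sub by auto
      show "(\<lambda>t. f2 + f3 * x t + 1/2 * f4 * (x t)^2) r = C2"
        using H2[OF rI] hJ[OF r] by simp
    qed
    ultimately show ?thesis using H1[OF t0I] H2[OF t0I] tt by simp
  qed
  have G: "f3 * x t + f4 / 2 * (x t)^2 = C2 - f2" if "t \<in> K" for t
    using H2[of t] hK[OF that] KI that by auto
  have xKle: "x s = x t" if st: "s \<in> K" "t \<in> K" "s \<le> t" for s t
  proof (rule ccontr)
    assume ne: "x s \<noteq> x t"
    have sI: "s \<in> I" and tI: "t \<in> I" using st KI by auto
    have cst: "continuous_on {s..t} x" by (rule seg_sol_cont[OF Iint Sx sI tI st(3)])
    define m where "m = (x s + x t) / 2"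
    obtain r where r: "s \<le> r" "r \<le> t" "x r = m"
    proof (cases "x s \<le> x t")
      case True
      then show ?thesis using IVT'[of x s m t, OF _ _ st(3) cst] that unfolding m_def by auto
    next
      case False
      then show ?thesis using IVT2'[of x t m s, OF _ _ st(3) cst] that unfolding m_def by auto
    qed
    have rK: "r \<in> K" using Kint st r unfolding is_interval_1 by blast
    have e1: "f3 * x s + f4 / 2 * (x s)^2 = f3 * x t + f4 / 2 * (x t)^2"
      using G[OF st(1)] G[OF st(2)] by linarith
    have xr: "x r = (x s + x t) / 2" using r(3) unfolding m_def .
    have e2: "f3 * ((x s + x t) / 2) + f4 / 2 * ((x s + x t) / 2)^2 = f3 * x s + f4 / 2 * (x s)^2"
      using G[OF rK] G[OF st(1)] unfolding xr by linarith
    show False by (rule quad_contra[OF f4nz ne e1 e2])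
  qed
  have xK: "x t = x t0" if "t \<in> K" for t
  proof (cases "t \<le> t0")
    case True then show ?thesis using xKle[OF that t0K] by simp
  next
    case False then show ?thesis using xKle[OF t0K that] by simp
  qed
  define X where "X = x t0"
  have LinS: "seg_sol I (\<lambda>t. C1 * x t + C2 * y t) (\<lambda>t. C1 * fst (u t) + C2 * snd (u t))"
    by (intro seg_sol_add seg_sol_cmult Sx Sy)
  have Yle: "C2 * (y b - y a) = b - a" if ab: "a \<in> K" "b \<in> K" "a \<le> b" for a b
  proof -
    have aI: "a \<in> I" and bI: "b \<in> I" using ab KI by auto
    have sub: "{a..b} \<subseteq> K" by (rule interval_sub[OF Kint ab(1,2)])
    from seg_sol_D[OF QS aI bI ab(3)] Qint[OF aI bI ab(3)]
    have e1: "(LBINT s:{a..b}. Hf s) = b - a" by simp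
    have "(LBINT s:{a..b}. Hf s) = (LBINT s:{a..b}. C1 * fst (u s) + C2 * snd (u s))"
      by (rule set_lebesgue_integral_cong) (use sub hK in \<open>auto simp: Hf_def\<close>)
    also have "\<dots> = C1 * x b + C2 * y b - (C1 * x a + C2 * y a)"
      using seg_sol_D[OF LinS aI bI ab(3)] by simp
    finally show ?thesis using e1 xK[OF ab(1)] xK[OF ab(2)] by (simp add: algebra_simps)
  qed
  have YK: "C2 * (y t - y t0) = t - t0" if "t \<in> K" for t
  proof (cases "t0 \<le> t")
    case True then show ?thesis using Yle[OF t0K that] by simp
  next
    case False then show ?thesis using Yle[OF that t0K] by (simp add: algebra_simps)
  qed
  have C2nz: "C2 \<noteq> 0" using YK[OF t1K] t1ne by auto
  have y1ne: "y t1 \<noteq> y t0" using YK[OF t1K] t1ne by auto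
  have ZK: "z t - 1/2 * X * y t = z t0 - 1/2 * X * y t0" if "t \<in> K" for t
  proof -
    have A: "seg_sol I (\<lambda>t. z t + (- X) * y t + 1/2 * (x t * y t))
        (\<lambda>t. 1/2 * (x t * snd (u t) - y t * fst (u t)) + (- X) * snd (u t)
            + 1/2 * (fst (u t) * y t + x t * snd (u t)))"
      by (intro seg_sol_add seg_sol_cmult Sy Sz XY(1))
    have "(\<lambda>t. z t + (- X) * y t + 1/2 * (x t * y t)) t = (\<lambda>t. z t + (- X) * y t + 1/2 * (x t * y t)) t0"
      by (rule seg_sol_zero[OF Kint seg_sol_mono[OF A KI] _ t0K that])
         (auto simp: xK X_def algebra_simps)
    then show ?thesis using xK[OF that] unfolding X_def by (simp add: algebra_simps)
  qed
  have VK: "v t - 1/12 * X^2 * y t = v t0 - 1/12 * X^2 * y t0" if "t \<in> K" for t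
  proof -
    have A: "seg_sol I (\<lambda>t. v t + (- 1/6 * X^2) * y t + 1/2 * (x t * z t) + (- 1/2 * X) * z t + (1/12 * X) * (x t * y t))
        (\<lambda>t. (- 1/2 * (z t + 1/6 * x t * y t) * fst (u t) + 1/12 * (x t)\<^sup>2 * snd (u t))
           + (- 1/6 * X^2) * snd (u t)
           + 1/2 * (fst (u t) * z t + x t * (1/2 * (x t * snd (u t) - y t * fst (u t))))
           + (- 1/2 * X) * (1/2 * (x t * snd (u t) - y t * fst (u t)))
           + (1/12 * X) * (fst (u t) * y t + x t * snd (u t)))"
      by (intro seg_sol_add seg_sol_cmult Sy Sz Sv XY(1) XZ(1))
    have "(\<lambda>t. v t + (- 1/6 * X^2) * y t + 1/2 * (x t * z t) + (- 1/2 * X) * z t + (1/12 * X) * (x t * y t)) t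
        = (\<lambda>t. v t + (- 1/6 * X^2) * y t + 1/2 * (x t * z t) + (- 1/2 * X) * z t + (1/12 * X) * (x t * y t)) t0"
      by (rule seg_sol_zero[OF Kint seg_sol_mono[OF A KI] _ t0K that])
         (auto simp: xK X_def algebra_simps power2_eq_square)
    then show ?thesis using xK[OF that] unfolding X_def by (simp add: algebra_simps power2_eq_square)
  qed
  have "h1 x y z p1 p3 p4 t1 = h1 x y z p1 p3 p4 t0" using hK[OF t1K] hK[OF t0K] by simp
  then have "f1 - f3 * y t1 - 1/2 * f4 * (X * y t1) - f4 * z t1 = f1 - f3 * y t0 - 1/2 * f4 * (X * y t0) - f4 * z t0"
    using H1[OF t0I] H1 t1J J_sub xK[OF t1K] unfolding X_def by auto
  moreover have zz: "z t1 = z t0 + 1/2 * X * (y t1 - y t0)" using ZK[OF t1K] by (simp add: field_simps)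
  ultimately have E: "f1 - f3 * y t1 - 1/2 * f4 * (X * y t1) - f4 * (z t0 + 1/2 * X * (y t1 - y t0))
      = f1 - f3 * y t0 - 1/2 * f4 * (X * y t0) - f4 * z t0" by simp
  have "(f3 + f4 * X) * (y t1 - y t0) = (f1 - f3 * y t0 - 1/2 * f4 * (X * y t0) - f4 * z t0)
      - (f1 - f3 * y t1 - 1/2 * f4 * (X * y t1) - f4 * (z t0 + 1/2 * X * (y t1 - y t0)))"
    by (simp add: field_simps)
  then have "(f3 + f4 * X) * (y t1 - y t0) = 0" using E by simp
  then have "f3 + f4 * X = 0" using y1ne by simp
  then have Xv: "X = - f3 / f4" using f4nz by (simp add: field_simps)
  have C2v: "C2 = f2 + f3 * X + 1/2 * f4 * X^2"
    using H2[OF t0I] hK[OF t0K] unfolding X_def by simp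
  define Dn where "Dn = 2 * f2 * f4 - f3^2"
  have C2D: "C2 = Dn / (2 * f4)" unfolding C2v Xv Dn_def using f4nz
    by (simp add: field_simps power2_eq_square)
  have Dnz: "Dn \<noteq> 0" using C2nz C2D by auto
  have yt: "y t = y t0 + 2 * f4 * (t - t0) / Dn" if "t \<in> K" for t
  proof -
    have "y t - y t0 = (t - t0) / C2" using YK[OF that] C2nz by (simp add: field_simps)
    also have "\<dots> = 2 * f4 * (t - t0) / Dn" unfolding C2D using f4nz Dnz by (simp add: field_simps)
    finally show ?thesis by simp
  qed
  have zt: "z t = z t0 + f3 * (t - t0) / (f3^2 - 2 * f2 * f4)" if "t \<in> K" for t
  proof -
    have "z t = z t0 + 1/2 * X * (y t - y t0)" using ZK[OF that] by (simp add: field_simps)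
    also have "\<dots> = z t0 + 1/2 * (- f3 / f4) * (2 * f4 * (t - t0) / Dn)" using yt[OF that] Xv by simp
    also have "\<dots> = z t0 + f3 * (t - t0) / (f3^2 - 2 * f2 * f4)"
      using f4nz Dnz unfolding Dn_def by (simp add: field_simps)
    finally show ?thesis .
  qed
  have vt: "v t = v t0 + f3^2 * (t - t0) / (6 * f4 * Dn)" if "t \<in> K" for t
  proof -
    have "v t = v t0 + 1/12 * X^2 * (y t - y t0)" using VK[OF that] by (simp add: field_simps)
    also have "\<dots> = v t0 + 1/12 * (- f3 / f4)^2 * (2 * f4 * (t - t0) / Dn)" using yt[OF that] Xv by simp
    also have "\<dots> = v t0 + f3^2 * (t - t0) / (6 * f4 * Dn)"
      using f4nz Dnz by (simp add: field_simps power2_eq_square)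
    finally show ?thesis .
  qed
  have xt: "x t = - f3 / f4" if "t \<in> K" for t using xK[OF that] Xv X_def by simp
  have QQ: "f1 * (- f3 / f4) + f2 * y t0 + (2 * f3 + 1/2 * f4 * (- f3 / f4)) * z t0 + 3 * f4 * v t0 = t0"
  proof -
    have "Qf t0 = f1 * (- f3 / f4) + f2 * y t0 + (2 * f3 + 1/2 * f4 * (- f3 / f4)) * z t0 + 3 * f4 * v t0"
      unfolding Qf_def using xt[OF t0K] by (simp add: algebra_simps)
    then show ?thesis using Qt0 by simp
  qed
  have partA: "\<forall>t\<in>J. x t = - f3 / f4 \<and> y t = y t0 + 2 * f4 * (t - t0) / (2 * f2 * f4 - f3\<^sup>2) \<and>
            z t = z t0 + f3 * (t - t0) / (f3\<^sup>2 - 2 * f2 * f4) \<and>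
            v t = v t0 + f3\<^sup>2 * (t - t0) / (6 * f4 * (2 * f2 * f4 - f3\<^sup>2))"
    using xt yt zt vt JK unfolding Dn_def by blast
  have partC: "f3 = 0 \<longrightarrow> (\<forall>t\<in>J. x t = 0 \<and> y t = y t0 + (t - t0) / f2 \<and> z t = z t0 \<and>
                    v t = v t0 \<and> v t0 = (t0 - f2 * y t0) / (3 * f4))"
  proof (intro impI ballI)
    fix t assume f30: "f3 = 0" and tJ: "t \<in> J"
    have tK: "t \<in> K" using tJ JK by auto
    have "y t = y t0 + 2 * f4 * (t - t0) / (2 * f2 * f4)" using yt[OF tK] f30 unfolding Dn_def by simp
    also have "\<dots> = y t0 + (t - t0) / f2" using f4nz by simp
    finally have "y t = y t0 + (t - t0) / f2" .
    moreover have "v t0 = (t0 - f2 * y t0) / (3 * f4)" using QQ f30 f4nz by (simp add: field_simps)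
    ultimately show "x t = 0 \<and> y t = y t0 + (t - t0) / f2 \<and> z t = z t0 \<and>
                    v t = v t0 \<and> v t0 = (t0 - f2 * y t0) / (3 * f4)"
      using xt[OF tK] zt[OF tK] vt[OF tK] f30 by simp
  qed
  show ?thesis
    using partA QQ partC unfolding f1_def f2_def f3_def f4_def by blast
qed

end
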